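(* Under the setup below, for every $\mathbf{z}\in\mathbb{R}^V$, \[\mathbf{M}\mathbf{z}=\mathbf{W}^{1/2}\mathbf{B}\,\mathbf{\Pi}^{(0)\top}\cdots\mathbf{\Pi}^{(\eta-1)\top}\mathbf{z}.\]
   Context: Setup. Let $G=(V,E)$ be a connected undirected graph with $|V|=n$ and $m$ edges (parallel edges allowed), positive edge weights $\mathbf{w}$, $\mathbf{W}=\mathrm{diag}(\mathbf{w})$, signed edge–vertex incidence matrix $\mathbf{B}\in\mathbb{R}^{E\times V}$; for a region (edge-induced subgraph) $H$, $\mathbf{B}[H]$ is $\mathbf{B}$ with rows of edges not in $E(H)$ set to zero. All matrices are padded with zeros to act on $\mathbb{R}^V$ (or map into $\mathbb{R}^E$); $\mathbf{I}$ is the $n\times n$ identity and $\mathbf{I}_S$ the diagonal $0/1$ matrix of $S\subseteq V$; $\mathbf{M}_{S,T}$ is the submatrix with rows $S$, columns $T$ (padded); $\mathbf{M}^{-1}$ is the Moore–Penrose pseudoinverse if singular. Separator tree. A separator tree $\mathcal{T}$ of $G$ is a rooted binary tree whose nodes are regions $H$ of $G$, each storing vertex sets $\partial H$ (boundary), $S(H)$ (separator), $F_H$ (eliminated vertices), defined top-down: the root is $H=G$ with $\partial G=\emptyset$ and $F_G=S(G)$. A non-leaf node $H$ has exactly two children $D_1,D_2$ whose edge sets partition $E(H)$, with no isolated vertices, and $V(D_1)\cap V(D_2)=S(H)$; then $\partial D_j=(\partial H\cup S(H))\cap V(D_j)$ for $j=1,2$, and $F_H=S(H)\setminus\partial H$.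 A node with a constant number of edges is a leaf, with $S(H)=\emptyset$ and $F_H=V(H)\setminus\partial H$. The level $\eta(H)$ of a node is the maximum number of edges on a tree path from $H$ down to a descendant (leaves have level 0); $\eta$ is the maximum level (height); $\mathcal{T}(i)$ is the set of nodes at level $i$. The sets $\{F_H\}_{H\in\mathcal{T}}$ partition $V$. Operators. For each node $H$ let $\mathbf{L}^{(H)}$ be a given Laplacian supported on $\partial H\cup F_H$; $\mathbf{X}^{(H)}=\mathbf{L}^{(H)}_{\partial H,F_H}(\mathbf{L}^{(H)}_{F_H,F_H})^{-1}$; $\mathbf{\Pi}^{(i)}=\mathbf{I}-\sum_{H\in\mathcal{T}(i)}\mathbf{X}^{(H)}$ for $0\le i\le\eta-1$. Slack tree operator. For a node $H$ with parent $P$, the edge operator is $\mathbf{M}_{(H,P)}=\mathbf{I}_{\partial H\cup F_H}-(\mathbf{L}^{(H)}_{F_H,F_H})^{-1}\mathbf{L}^{(H)}_{F_H,\partial H}=\mathbf{I}_{\partial H\cup F_H}-\mathbf{X}^{(H)\top}$. For a leaf $H$, the leaf operator is $\mathbf{J}_H=\mathbf{W}^{1/2}\mathbf{B}[H]$. For a leaf $H$ and a node $A$ that is $H$ or an ancestor of $H$, with tree path $H=H_1,H_2,\dots,H_t=A$ ($H_{j+1}$ the parent of $H_j$), let $\mathbf{M}_{H\leftarrow A}=\mathbf{M}_{(H_1,H_2)}\mathbf{M}_{(H_2,H_3)}\cdots\mathbf{M}_{(H_{t-1},H_t)}$ (the identity if $t=1$). Then $\mathbf{M}=\sum_{\text{leaf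 }H,\ \text{node }A:\ H\text{ in the subtree of }A}\mathbf{J}_H\mathbf{M}_{H\leftarrow A}\mathbf{I}_{F_A}$. *)

theory Defs
  imports "HOL-Analysis.Analysis"
begin

text \<open>Graph: vertices = UNIV :: 'v (finite type), edges = UNIV :: 'e (finite type,
 parallel edges allowed); edge e is oriented from fst (ends e) to snd (ends e).
 Matrices are HOL-Analysis matrices real^'cols^'rows, so real^'v^'e has rows indexed by edges.\<close>

definition verts :: "('e \<Rightarrow> 'v \<times> 'v) \<Rightarrow> 'e set \<Rightarrow> 'v set" where
  "verts ends Es = fst ` ends ` Es \<union> snd ` ends ` Es"

definition graph_connected :: "('e \<Rightarrow> 'v \<times> 'v) \<Rightarrow> bool" where
  "graph_connected ends \<longleftrightarrow>
     (let A = range ends \<union> converse (range ends) in \<forall>u v. (u, v) \<in> A\<^sup>*)"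

definition incidence :: "('e \<Rightarrow> 'v \<times> 'v) \<Rightarrow> real^'v^'e" where
  "incidence ends = (\<chi> e v. if v = fst (ends e) then 1 else if v = snd (ends e) then -1 else 0)"

definition incidence_on :: "('e \<Rightarrow> 'v \<times> 'v) \<Rightarrow> 'e set \<Rightarrow> real^'v^'e" where
  "incidence_on ends Es = (\<chi> e v. if e \<in> Es then incidence ends $ e $ v else 0)"

definition sqrtW :: "('e \<Rightarrow> real) \<Rightarrow> real^'e^'e" where
  "sqrtW w = (\<chi> e f. if e = f then sqrt (w e) else 0)"

definition idS :: "'v set \<Rightarrow> real^'v^'v" where
  "idS S = (\<chi> i j. if i = j \<and> i \<in> S then 1 else 0)"

definition submat :: "real^'v^'v \<Rightarrow> 'v set \<Rightarrow> 'v set \<Rightarrow> real^'v^'v" where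
  "submat M S T = (\<chi> i j. if i \<in> S \<and> j \<in> T then M $ i $ j else 0)"

text \<open>Moore--Penrose pseudoinverse (coincides with the inverse when nonsingular)\<close>
definition is_pinv :: "real^'v^'v \<Rightarrow> real^'v^'v \<Rightarrow> bool" where
  "is_pinv A X \<longleftrightarrow> A ** X ** A = A \<and> X ** A ** X = X \<and>
     transpose (A ** X) = A ** X \<and> transpose (X ** A) = X ** A"

definition pinv :: "real^'v^'v \<Rightarrow> real^'v^'v" where
  "pinv A = (THE X. is_pinv A X)"

definition laplacian_on :: "'v set \<Rightarrow> real^'v^'v \<Rightarrow> bool" where
  "laplacian_on S L \<longleftrightarrow> transpose L = L \<and>
     (\<forall>i j. i \<noteq> j \<longrightarrow> L $ i $ j \<le> 0) \<and>
     (\<forall>i. (\<Sum>j\<in>UNIV. L $ i $ j) = 0) \<and>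
     (\<forall>i j. (i \<notin> S \<or> j \<notin> S) \<longrightarrow> L $ i $ j = 0)"

text \<open>Separator tree: a leaf stores its region (edge set); an inner node stores its region,
 its separator S(H) and its two children.  Boundaries and eliminated sets are computed top-down.\<close>
datatype ('v, 'e) stree = SLeaf "'e set" | SNode "'e set" "'v set" "('v, 'e) stree" "('v, 'e) stree"

fun region :: "('v, 'e) stree \<Rightarrow> 'e set" where
  "region (SLeaf Es) = Es"
| "region (SNode Es S D1 D2) = Es"

fun sep_wf :: "('e \<Rightarrow> 'v \<times> 'v) \<Rightarrow> ('v, 'e) stree \<Rightarrow> bool" where
  "sep_wf ends (SLeaf Es) = True"
| "sep_wf ends (SNode Es S D1 D2) =
     (region D1 \<union> region D2 = Es \<and> region D1 \<inter> region D2 = {} \<and>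
      region D1 \<noteq> {} \<and> region D2 \<noteq> {} \<and>
      verts ends (region D1) \<inter> verts ends (region D2) = S \<and>
      sep_wf ends D1 \<and> sep_wf ends D2)"

definition separator_tree :: "('e \<Rightarrow> 'v \<times> 'v) \<Rightarrow> ('v, 'e) stree \<Rightarrow> bool" where
  "separator_tree ends T \<longleftrightarrow> region T = UNIV \<and> sep_wf ends T"

fun lvl :: "('v, 'e) stree \<Rightarrow> nat" where
  "lvl (SLeaf Es) = 0"
| "lvl (SNode Es S D1 D2) = Suc (max (lvl D1) (lvl D2))"

fun elim :: "('e \<Rightarrow> 'v \<times> 'v) \<Rightarrow> 'v set \<Rightarrow> ('v, 'e) stree \<Rightarrow> 'v set" where
  "elim ends bd (SLeaf Es) = verts ends Es - bd"
| "elim ends bd (SNode Es S D1 D2) = S - bd"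

definition child_bd :: "('e \<Rightarrow> 'v \<times> 'v) \<Rightarrow> 'v set \<Rightarrow> 'v set \<Rightarrow> ('v, 'e) stree \<Rightarrow> 'v set" where
  "child_bd ends bd S D = (bd \<union> S) \<inter> verts ends (region D)"

fun nodes :: "('e \<Rightarrow> 'v \<times> 'v) \<Rightarrow> 'v set \<Rightarrow> ('v, 'e) stree \<Rightarrow> ('v set \<times> ('v, 'e) stree) list" where
  "nodes ends bd (SLeaf Es) = [(bd, SLeaf Es)]"
| "nodes ends bd (SNode Es S D1 D2) =
     (bd, SNode Es S D1 D2) # nodes ends (child_bd ends bd S D1) D1 @ nodes ends (child_bd ends bd S D2) D2"

text \<open>X^(H) = L_{\<partial>H,F_H} (L_{F_H,F_H})^{-1}; the Laplacian of node H is L (region H)\<close>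
definition Xop :: "('e \<Rightarrow> 'v \<times> 'v) \<Rightarrow> ('e set \<Rightarrow> real^'v^'v) \<Rightarrow> 'v set \<Rightarrow> ('v, 'e) stree \<Rightarrow> real^'v^'v" where
  "Xop ends L bd H = submat (L (region H)) bd (elim ends bd H) **
                     pinv (submat (L (region H)) (elim ends bd H) (elim ends bd H))"

definition PiOp :: "('e \<Rightarrow> 'v \<times> 'v) \<Rightarrow> ('e set \<Rightarrow> real^'v^'v) \<Rightarrow> ('v, 'e) stree \<Rightarrow> nat \<Rightarrow> real^'v^'v" where
  "PiOp ends L T i = mat 1 - sum_list [Xop ends L bd H. (bd, H) \<leftarrow> nodes ends {} T, lvl H = i]"

definition Medge :: "('e \<Rightarrow> 'v \<times> 'v) \<Rightarrow> ('e set \<Rightarrow> real^'v^'v) \<Rightarrow> 'v set \<Rightarrow> ('v, 'e) stree \<Rightarrow> real^'v^'v" where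
  "Medge ends L bd H = idS (bd \<union> elim ends bd H) - transpose (Xop ends L bd H)"

text \<open>for the subtree rooted at A (boundary bd): list of (E(H), M_{H<-A}) over its leaves H\<close>
fun down :: "('e \<Rightarrow> 'v \<times> 'v) \<Rightarrow> ('e set \<Rightarrow> real^'v^'v) \<Rightarrow> 'v set \<Rightarrow> ('v, 'e) stree \<Rightarrow> ('e set \<times> (real^'v^'v)) list" where
  "down ends L bd (SLeaf Es) = [(Es, mat 1)]"
| "down ends L bd (SNode Es S D1 D2) =
     map (\<lambda>(H, P). (H, P ** Medge ends L (child_bd ends bd S D1) D1)) (down ends L (child_bd ends bd S D1) D1) @
     map (\<lambda>(H, P). (H, P ** Medge ends L (child_bd ends bd S D2) D2)) (down ends L (child_bd ends bd S D2) D2)"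

definition Jleaf :: "('e \<Rightarrow> 'v \<times> 'v) \<Rightarrow> ('e \<Rightarrow> real) \<Rightarrow> 'e set \<Rightarrow> real^'v^'e" where
  "Jleaf ends w Es = sqrtW w ** incidence_on ends Es"

definition slack_op :: "('e \<Rightarrow> 'v \<times> 'v) \<Rightarrow> ('e \<Rightarrow> real) \<Rightarrow> ('e set \<Rightarrow> real^'v^'v) \<Rightarrow> ('v, 'e) stree \<Rightarrow> real^'v^'e" where
  "slack_op ends w L T =
     sum_list [sum_list [Jleaf ends w H ** P ** idS (elim ends bd A). (H, P) \<leftarrow> down ends L bd A].
               (bd, A) \<leftarrow> nodes ends {} T]"

end

theory Submission
  imports Defs
begin

lemma sym_matrix_by_inner:
  fixes M :: "real^'n^'n"
  assumes "\<And>x y. (M *v x) \<bullet> y = x \<bullet> (M *v y)"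
  shows "transpose M = M"
proof -
  have "transpose M *v x = M *v x" for x
  proof -
    have "(transpose M *v x - M *v x) \<bullet> y = 0" for y
      using assms[of x y] dot_lmul_matrix[of x M y]
      by (simp add: inner_diff_left)
    then show ?thesis by (metis inner_eq_zero_iff eq_iff_diff_eq_0)
  qed
  then show ?thesis by (simp add: matrix_eq)
qed

lemma mp_unique:
  fixes A X Y :: "real^'n^'n"
  assumes X: "is_pinv A X" and Y: "is_pinv A Y"
  shows "X = Y"
proof -
  from X have X1: "A ** X ** A = A" and X2: "X ** A ** X = X" and X3: "transpose (A ** X) = A ** X"
    and X4: "transpose (X ** A) = X ** A" by (auto simp: is_pinv_def)
  from Y have Y1: "A ** Y ** A = A" and Y2: "Y ** A ** Y = Y" and Y3: "transpose (A ** Y) = A ** Y"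
    and Y4: "transpose (Y ** A) = Y ** A" by (auto simp: is_pinv_def)
  have "X = X ** (A ** X)" using X2 by (simp add: matrix_mul_assoc)
  also have "\<dots> = X ** transpose (A ** X)" using X3 by simp
  also have "\<dots> = X ** transpose X ** transpose A" by (simp add: matrix_transpose_mul matrix_mul_assoc)
  also have "\<dots> = X ** transpose X ** transpose (A ** Y ** A)" using Y1 by simp
  also have "\<dots> = X ** (transpose (A ** X)) ** transpose (A ** Y)"
    by (simp add: matrix_transpose_mul matrix_mul_assoc)
  also have "\<dots> = X ** A ** X ** A ** Y" using X3 Y3 by (simp add: matrix_mul_assoc)
  also have "\<dots> = X ** A ** Y" using X2 by simp
  finally have eX: "X = X ** A ** Y" .
  have "Y = (Y ** A) ** Y" using Y2 by simp
  also have "\<dots> = transpose (Y ** A) ** Y" using Y4 by simp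
  also have "\<dots> = transpose A ** transpose Y ** Y" by (simp add: matrix_transpose_mul)
  also have "\<dots> = transpose (A ** X ** A) ** transpose Y ** Y" using X1 by simp
  also have "\<dots> = transpose (X ** A) ** transpose (Y ** A) ** Y"
    by (simp add: matrix_transpose_mul matrix_mul_assoc)
  also have "\<dots> = X ** A ** (Y ** A ** Y)" using X4 Y4 by (simp add: matrix_mul_assoc)
  also have "\<dots> = X ** A ** Y" using Y2 by simp
  finally have eY: "Y = X ** A ** Y" .
  show ?thesis by (rule trans[OF eX eY[symmetric]])
qed

lemma mp_exists:
  fixes A :: "real^'n^'n"
  assumes sym: "transpose A = A"
  shows "\<exists>X. is_pinv A X"
proof -
  define R where "R = range (\<lambda>x. A *v x)"
  have subR: "subspace R" unfolding R_def
    by (rule linear_subspace_image) (auto simp: matrix_vector_mul_linear)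
  obtain B where B: "B \<subseteq> R" "pairwise orthogonal B" "span B = R"
    using orthogonal_basis_subspace[OF subR] by metis
  define p where "p x = (\<Sum>b\<in>B. (b \<bullet> x / (b \<bullet> b)) *\<^sub>R b)" for x
  have pR: "p x \<in> R" for x
  proof -
    have "p x \<in> span B" unfolding p_def by (intro span_sum span_mul span_base)
    then show ?thesis using B(3) by simp
  qed
  have porth: "(x - p x) \<bullet> w = 0" if "w \<in> R" for x w
    using Gram_Schmidt_step[OF B(2), of w x] that B(3)
    by (simp add: p_def orthogonal_def inner_commute)
  have symi: "(A *v x) \<bullet> y = x \<bullet> (A *v y)" for x y
  proof -
    have "A *v x = x v* A" using transpose_matrix_vector[of A x] sym by simp
    then show ?thesis using dot_lmul_matrix[of x A y] by simp
  qed
  have ker: "A *v k = 0" if "\<And>w. w \<in> R \<Longrightarrow> k \<bullet> w = 0" for k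
  proof -
    have "k \<bullet> (A *v (A *v k)) = 0" using that by (simp add: R_def)
    then have "(A *v k) \<bullet> (A *v k) = 0" by (simp add: symi)
    then show ?thesis by simp
  qed
  have Ap: "A *v p x = A *v x" for x
  proof -
    have "A *v (x - p x) = 0" by (rule ker) (use porth in auto)
    then show ?thesis by (simp add: matrix_vector_mult_diff_distrib)
  qed
  have pfix: "y \<in> R \<Longrightarrow> p y = y" for y
  proof -
    assume y: "y \<in> R"
    have "y - p y \<in> R" using y pR subR by (simp add: subspace_diff)
    then have "(y - p y) \<bullet> (y - p y) = 0" using porth by blast
    then show ?thesis by simp
  qed
  have linp: "linear p"
    by (rule linearI) (simp_all add: p_def inner_add_right add_divide_distrib scaleR_add_left
        sum.distrib scaleR_sum_right)
  have inj: "inj_on (\<lambda>x. A *v x) R"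
  proof (rule inj_onI)
    fix r1 r2 assume r: "r1 \<in> R" "r2 \<in> R" "A *v r1 = A *v r2"
    have d: "r1 - r2 \<in> R" using r subR by (simp add: subspace_diff)
    then obtain u where u: "r1 - r2 = A *v u" by (auto simp: R_def)
    have "A *v (r1 - r2) = 0" using r by (simp add: matrix_vector_mult_diff_distrib)
    then have "(r1 - r2) \<bullet> (r1 - r2) = 0" using symi[of u "r1 - r2"] u by simp
    then show "r1 = r2" by simp
  qed
  obtain g where g: "range g \<subseteq> R" "linear g" "\<And>v. v \<in> R \<Longrightarrow> g (A *v v) = v"
    using linear_exists_left_inverse_on[OF _ subR inj] by (auto simp: matrix_vector_mul_linear)
  have AXid: "A *v g y = y" if yR: "y \<in> R" for y
  proof -
    obtain u where u: "y = A *v u" using yR by (auto simp: R_def)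
    have "g y = p u" using g(3)[OF pR[of u]] Ap u by simp
    then show ?thesis using Ap u by simp
  qed
  define X where "X = matrix (\<lambda>x. g (p x))"
  have linX: "linear (\<lambda>x. g (p x))" using linp g(2) linear_compose[of p g] by (simp add: o_def)
  have Xv: "X *v x = g (p x)" for x
    unfolding X_def using matrix_vector_mul(2)[OF linX] by metis
  have AX: "(A ** X) *v x = p x" for x
    using AXid[OF pR] by (simp add: Xv flip: matrix_vector_mul_assoc)
  have XA: "(X ** A) *v x = p x" for x
  proof -
    have "(X ** A) *v x = g (p (A *v x))" by (simp add: Xv flip: matrix_vector_mul_assoc)
    also have "\<dots> = g (A *v x)" using pfix by (simp add: R_def)
    also have "\<dots> = g (A *v p x)" by (simp add: Ap)
    also have "\<dots> = p x" using g(3) pR by simp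
    finally show ?thesis .
  qed
  have psym: "p x \<bullet> y = x \<bullet> p y" for x y
  proof -
    have "p x \<bullet> y = p x \<bullet> p y + p x \<bullet> (y - p y)" by (simp add: inner_diff_right)
    also have "p x \<bullet> (y - p y) = 0" using porth pR by (simp add: inner_commute)
    moreover have "x \<bullet> p y = p x \<bullet> p y + (x - p x) \<bullet> p y" by (simp add: inner_diff_left)
    moreover have "(x - p x) \<bullet> p y = 0" using porth pR by simp
    ultimately show ?thesis by simp
  qed
  have "A ** X ** A = A"
  proof -
    have "(A ** X ** A) *v x = A *v x" for x
    proof -
      have "(A ** X ** A) *v x = (A ** X) *v (A *v x)" by (simp add: matrix_vector_mul_assoc)
      also have "\<dots> = A *v x" using AX pfix by (simp add: R_def)
      finally show ?thesis .
    qed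
    then show ?thesis by (simp add: matrix_eq)
  qed
  moreover have "X ** A ** X = X"
  proof -
    have "(X ** A ** X) *v x = X *v x" for x
    proof -
      have "(X ** A ** X) *v x = (X ** A) *v (X *v x)" by (simp add: matrix_vector_mul_assoc)
      also have "\<dots> = p (g (p x))" by (simp add: XA Xv)
      also have "\<dots> = g (p x)" using pfix g(1) by blast
      finally show ?thesis by (simp add: Xv)
    qed
    then show ?thesis by (simp add: matrix_eq)
  qed
  moreover have "transpose (A ** X) = A ** X"
    by (rule sym_matrix_by_inner) (simp add: AX psym)
  moreover have "transpose (X ** A) = X ** A"
    by (rule sym_matrix_by_inner) (simp add: XA psym)
  ultimately show ?thesis unfolding is_pinv_def by blast
qed

lemma pinv_is_pinv:
  fixes A :: "real^'n^'n"
  assumes "transpose A = A"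
  shows "is_pinv A (pinv A)"
proof -
  obtain X where "is_pinv A X" using mp_exists[OF assms] by blast
  then show ?thesis unfolding pinv_def using mp_unique by (metis theI)
qed

lemma mm_add_r: "((A::real^'n^'m) + B) ** C = A ** C + B ** C"
  by (simp add: matrix_matrix_mult_def vec_eq_iff algebra_simps sum.distrib)

lemma mm_zero_r[simp]: "(A::real^'n^'m) ** (0::real^'k^'n) = 0"
  by (simp add: matrix_matrix_mult_def vec_eq_iff)

lemma mm_zero_l[simp]: "(0::real^'n^'m) ** (A::real^'k^'n) = 0"
  by (simp add: matrix_matrix_mult_def vec_eq_iff)

lemma transpose_add: "transpose ((A::real^'n^'m) + B) = transpose A + transpose B"
  by (simp add: transpose_def vec_eq_iff)

lemma transpose_diff: "transpose ((A::real^'n^'m) - B) = transpose A - transpose B"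
  by (simp add: transpose_def vec_eq_iff)

lemma transpose_zero[simp]: "transpose (0::real^'n^'m) = 0"
  by (simp add: transpose_def vec_eq_iff)

lemma transpose_sum_list:
  "transpose (sum_list (map f xs) :: real^'n^'m) = sum_list (map (\<lambda>x. transpose (f x)) xs)"
  by (induction xs) (simp_all add: transpose_add)

lemma sum_list_mv:
  "(sum_list (map f xs) :: real^'n^'m) *v z = sum_list (map (\<lambda>x. f x *v z) xs)"
  by (induction xs) (simp_all add: matrix_vector_mult_add_rdistrib)

lemma idS_left: "(idS A ** (M::real^'n^'v)) $ i $ j = (if i \<in> A then M $ i $ j else 0)"
proof -
  have e: "(if i = k \<and> i \<in> A then 1 else 0) * M $ k $ j = (if k = i then (if i \<in> A then M $ k $ j else 0) else 0)" for k :: 'v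
    by auto
  have "(idS A ** M) $ i $ j = (\<Sum>k\<in>UNIV. (if i = k \<and> i \<in> A then 1 else 0) * M $ k $ j)"
    unfolding matrix_matrix_mult_def idS_def by simp
  also have "\<dots> = (\<Sum>k\<in>UNIV. (if k = i then (if i \<in> A then M $ k $ j else 0) else 0))"
    by (simp only: e)
  finally show ?thesis by simp
qed

lemma idS_right: "((M::real^'v^'m) ** idS A) $ i $ j = (if j \<in> A then M $ i $ j else 0)"
proof -
  have e: "M $ i $ k * (if k = j \<and> k \<in> A then 1 else 0) = (if k = j then (if j \<in> A then M $ i $ k else 0) else 0)" for k :: 'v
    by auto
  have "(M ** idS A) $ i $ j = (\<Sum>k\<in>UNIV. M $ i $ k * (if k = j \<and> k \<in> A then 1 else 0))"
    unfolding matrix_matrix_mult_def idS_def by simp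
  also have "\<dots> = (\<Sum>k\<in>UNIV. (if k = j then (if j \<in> A then M $ i $ k else 0) else 0))"
    by (simp only: e)
  finally show ?thesis by simp
qed

lemma idS_mult: "idS A ** idS B = idS (A \<inter> B)"
  by (simp add: vec_eq_iff idS_left) (simp add: idS_def)

lemma idS_empty: "idS {} = 0"
  by (simp add: idS_def vec_eq_iff)

lemma idS_Un: "A \<inter> B = {} \<Longrightarrow> idS (A \<union> B) = idS A + idS B"
  by (auto simp: idS_def vec_eq_iff)

lemma transpose_idS: "transpose (idS A) = idS A"
  by (auto simp: idS_def vec_eq_iff transpose_def)

lemma disj_zero:
  assumes "A \<inter> B = {}" "idS B ** M = (M::real^'n^'v)"
  shows "idS A ** M = 0"
proof -
  have "idS A ** M = idS A ** (idS B ** M)" using assms(2) by simp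
  also have "\<dots> = idS (A \<inter> B) ** M" by (simp add: matrix_mul_assoc idS_mult)
  finally show ?thesis using assms(1) by (simp add: idS_empty)
qed

lemma submat_left: "idS S ** submat M S T = submat M S T"
  by (simp add: vec_eq_iff idS_left) (simp add: submat_def)

lemma submat_right: "submat M S T ** idS T = submat M S T"
  by (simp add: vec_eq_iff idS_right) (simp add: submat_def)

lemma submat_sym: "transpose M = M \<Longrightarrow> transpose (submat M S S) = submat M S S"
  by (auto simp: submat_def vec_eq_iff transpose_def dest: arg_cong[where f="\<lambda>M. M $ _ $ _"])

lemma verts_Un: "verts ends (A \<union> B) = verts ends A \<union> verts ends B"
  by (auto simp: verts_def)

lemma verts_mono: "A \<subseteq> B \<Longrightarrow> verts ends A \<subseteq> verts ends B"
  by (auto simp: verts_def)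

lemma inc_idS:
  assumes "verts ends Es \<subseteq> S"
  shows "incidence_on ends Es ** idS S = incidence_on ends Es"
proof -
  have "incidence_on ends Es $ e $ v = 0" if "v \<notin> S" for e v
  proof -
    have "e \<in> Es \<Longrightarrow> v \<noteq> fst (ends e) \<and> v \<noteq> snd (ends e)"
      using assms that by (auto simp: verts_def)
    then show ?thesis by (auto simp: incidence_on_def incidence_def)
  qed
  then show ?thesis by (simp add: vec_eq_iff idS_right)
qed

lemma inc_Un:
  "A \<inter> B = {} \<Longrightarrow> incidence_on ends (A \<union> B) = incidence_on ends A + incidence_on ends B"
  by (auto simp: incidence_on_def vec_eq_iff)

lemma inc_UNIV: "incidence_on ends UNIV = incidence ends"
  by (simp add: incidence_on_def vec_eq_iff)

lemma elim_sub: "sep_wf ends H \<Longrightarrow> elim ends b H \<subseteq> verts ends (region H)"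
proof (cases H)
  case (SNode Es S D1 D2)
  assume wf: "sep_wf ends H"
  then have "region D1 \<subseteq> Es" "S \<subseteq> verts ends (region D1)" using SNode by auto
  then have "S \<subseteq> verts ends Es" using verts_mono[of "region D1" Es ends] by auto
  then show ?thesis using SNode by auto
qed simp

lemma elim_bd: "elim ends b H \<inter> b = {}"
  by (cases H) auto

lemma nodes_props:
  assumes "sep_wf ends T" "(b', H') \<in> set (nodes ends bd T)"
  shows "region H' \<subseteq> region T \<and> sep_wf ends H' \<and> ((b', H') = (bd, T) \<or> lvl H' < lvl T)
         \<and> elim ends b' H' \<inter> bd = {} \<and> b' \<subseteq> bd \<union> verts ends (region T)"
  using assms
proof (induction T arbitrary: bd)
  case (SLeaf Es)
  then have e: "b' = bd" "H' = SLeaf Es" by auto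
  show ?case unfolding e using SLeaf.prems(1) elim_bd[of ends bd "SLeaf Es"] by simp
next
  case (SNode Es S D1 D2)
  let ?T = "SNode Es S D1 D2"
  have wf1: "sep_wf ends D1" and wf2: "sep_wf ends D2"
    and r1: "region D1 \<subseteq> Es" and r2: "region D2 \<subseteq> Es" using SNode.prems(1) by (simp_all, blast+)
  have child: "region H' \<subseteq> region ?T \<and> sep_wf ends H' \<and> lvl H' < lvl ?T
         \<and> elim ends b' H' \<inter> bd = {} \<and> b' \<subseteq> bd \<union> verts ends (region ?T)"
    if wfD: "sep_wf ends D" and rD: "region D \<subseteq> Es" and lv: "lvl D < lvl ?T"
      and mem: "(b', H') \<in> set (nodes ends (child_bd ends bd S D) D)"
      and IH: "\<And>bd. sep_wf ends D \<Longrightarrow> (b', H') \<in> set (nodes ends bd D) \<Longrightarrow>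
        region H' \<subseteq> region D \<and> sep_wf ends H' \<and> ((b', H') = (bd, D) \<or> lvl H' < lvl D)
         \<and> elim ends b' H' \<inter> bd = {} \<and> b' \<subseteq> bd \<union> verts ends (region D)" for D
  proof -
    note I = IH[OF wfD mem]
    have rH: "region H' \<subseteq> region D" and wH: "sep_wf ends H'"
      and lvH: "(b', H') = (child_bd ends bd S D, D) \<or> lvl H' < lvl D"
      and dH: "elim ends b' H' \<inter> child_bd ends bd S D = {}"
      and bH: "b' \<subseteq> child_bd ends bd S D \<union> verts ends (region D)" using I by blast+
    have F1: "elim ends b' H' \<subseteq> verts ends (region D)"
      using elim_sub[OF wH, of b'] verts_mono[OF rH, of ends] by (rule order_trans)
    have "elim ends b' H' \<inter> bd \<subseteq> elim ends b' H' \<inter> child_bd ends bd S D"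
      using F1 unfolding child_bd_def by blast
    then have c1: "elim ends b' H' \<inter> bd = {}" using dH by blast
    have "b' \<subseteq> verts ends (region D)" using bH unfolding child_bd_def by blast
    then have c2: "b' \<subseteq> verts ends Es" using verts_mono[OF rD, of ends] by (rule order_trans)
    have c3: "lvl H' < lvl ?T" using lvH lv by auto
    have c4: "region H' \<subseteq> region ?T" using rH rD by simp
    show ?thesis using c1 c2 c3 c4 wH by (simp add: le_supI2)
  qed
  have lv1: "lvl D1 < lvl ?T" and lv2: "lvl D2 < lvl ?T" by auto
  from SNode.prems(2) consider "(b', H') = (bd, ?T)"
    | "(b', H') \<in> set (nodes ends (child_bd ends bd S D1) D1)"
    | "(b', H') \<in> set (nodes ends (child_bd ends bd S D2) D2)" by auto
  then show ?case
  proof cases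
    case 1
    then have e: "b' = bd" "H' = ?T" by auto
    show ?thesis unfolding e using SNode.prems(1) elim_bd[of ends bd ?T] by (simp only: order_refl simp_thms Un_upper1)
  next
    case 2 show ?thesis using child[OF wf1 r1 lv1 2 SNode.IH(1)] by blast
  next
    case 3 show ?thesis using child[OF wf2 r2 lv2 3 SNode.IH(2)] by blast
  qed
qed

lemma childF:
  assumes "sep_wf ends D" "(b', H') \<in> set (nodes ends (child_bd ends bd S D) D)"
  shows "elim ends b' H' \<subseteq> verts ends (region D) - S"
proof -
  note I = nodes_props[OF assms]
  have "elim ends b' H' \<subseteq> verts ends (region D)"
    using I elim_sub[of ends H' b'] verts_mono[of "region H'" "region D" ends] by blast
  then show ?thesis using I by (auto simp: child_bd_def)
qed

lemma childB:
  assumes "sep_wf ends D" "(b', H') \<in> set (nodes ends (child_bd ends bd S D) D)"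
  shows "b' \<subseteq> verts ends (region D)"
  using nodes_props[OF assms] by (auto simp: child_bd_def)

section \<open>Level sums\<close>

definition sigY :: "('v set \<Rightarrow> ('v, 'e) stree \<Rightarrow> real^'v^'v) \<Rightarrow> nat \<Rightarrow> ('v set \<times> ('v, 'e) stree) list \<Rightarrow> real^'v^'v"
  where "sigY Y i xs = sum_list (map (\<lambda>(b, H). if lvl H = i then Y b H else 0) xs)"

lemma sig_zero:
  "(\<forall>(b, H)\<in>set xs. C ** Y b H = 0) \<Longrightarrow> C ** sigY Y i xs = 0"
  by (induction xs) (auto simp: sigY_def matrix_add_ldistrib)

lemma sig_Cons: "sigY Y i ((b, H) # xs) = (if lvl H = i then Y b H else 0) + sigY Y i xs"
  by (simp add: sigY_def)

lemma sig_append: "sigY Y i (xs @ ys) = sigY Y i xs + sigY Y i ys"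
  by (simp add: sigY_def)

lemma sig_Nil: "sigY Y i [] = 0"
  by (simp add: sigY_def)

lemma Fa:
  assumes "sep_wf ends T"
    "\<forall>(b, H)\<in>set (nodes ends bd T). idS (elim ends b H) ** Y b H = Y b H"
    "(b, H) \<in> set (nodes ends bd T)"
  shows "idS (elim ends b H) ** sigY Y i (nodes ends bd T) = (if lvl H = i then Y b H else 0)"
  using assms
proof (induction T arbitrary: bd b H)
  case (SLeaf Es)
  then show ?case by (auto simp: sig_Cons sig_Nil)
next
  case (SNode Es S D1 D2)
  let ?T = "SNode Es S D1 D2"
  let ?b1 = "child_bd ends bd S D1" and ?b2 = "child_bd ends bd S D2"
  have wf1: "sep_wf ends D1" and wf2: "sep_wf ends D2"
    and SV: "verts ends (region D1) \<inter> verts ends (region D2) = S" using SNode.prems by auto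
  have sup1: "\<forall>(b, H)\<in>set (nodes ends ?b1 D1). idS (elim ends b H) ** Y b H = Y b H"
    and sup2: "\<forall>(b, H)\<in>set (nodes ends ?b2 D2). idS (elim ends b H) ** Y b H = Y b H"
    and supT: "idS (elim ends bd ?T) ** Y bd ?T = Y bd ?T"
    using SNode.prems(2) by auto
  have z1: "idS A ** sigY Y i (nodes ends ?b1 D1) = 0" if "A \<inter> (verts ends (region D1) - S) = {}" for A
  proof (rule sig_zero, intro ballI, clarify)
    fix b H assume m: "(b, H) \<in> set (nodes ends ?b1 D1)"
    have d: "A \<inter> elim ends b H = {}" using that childF[OF wf1 m] by blast
    have s: "idS (elim ends b H) ** Y b H = Y b H" using sup1 m by fast
    show "idS A ** Y b H = 0" by (rule disj_zero[OF d s])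
  qed
  have z2: "idS A ** sigY Y i (nodes ends ?b2 D2) = 0" if "A \<inter> (verts ends (region D2) - S) = {}" for A
  proof (rule sig_zero, intro ballI, clarify)
    fix b H assume m: "(b, H) \<in> set (nodes ends ?b2 D2)"
    have d: "A \<inter> elim ends b H = {}" using that childF[OF wf2 m] by blast
    have s: "idS (elim ends b H) ** Y b H = Y b H" using sup2 m by fast
    show "idS A ** Y b H = 0" by (rule disj_zero[OF d s])
  qed
  have zT: "idS A ** (if lvl ?T = i then Y bd ?T else 0) = 0" if "A \<inter> (S - bd) = {}" for A
    using disj_zero[OF that supT[simplified]] by simp
  from SNode.prems(3) consider "(b, H) = (bd, ?T)"
    | "(b, H) \<in> set (nodes ends ?b1 D1)"
    | "(b, H) \<in> set (nodes ends ?b2 D2)" by auto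
  then show ?case
  proof cases
    case 1
    then have "idS (elim ends b H) ** sigY Y i (nodes ends ?b1 D1) = 0"
      "idS (elim ends b H) ** sigY Y i (nodes ends ?b2 D2) = 0"
      by (auto intro!: z1 z2)
    then show ?thesis using 1 supT by (simp add: sig_Cons sig_append sig_Nil matrix_add_ldistrib)
  next
    case 2
    have F: "elim ends b H \<subseteq> verts ends (region D1) - S" using childF[OF wf1 2] .
    have "idS (elim ends b H) ** sigY Y i (nodes ends ?b2 D2) = 0"
      by (rule z2) (use F SV in blast)
    moreover have "idS (elim ends b H) ** (if lvl ?T = i then Y bd ?T else 0) = 0"
      by (rule zT) (use F in blast)
    moreover have "idS (elim ends b H) ** sigY Y i (nodes ends ?b1 D1) = (if lvl H = i then Y b H else 0)"
      using SNode.IH(1)[OF wf1 sup1 2] .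
    ultimately show ?thesis by (simp add: sig_Cons sig_append sig_Nil matrix_add_ldistrib)
  next
    case 3
    have F: "elim ends b H \<subseteq> verts ends (region D2) - S" using childF[OF wf2 3] .
    have "idS (elim ends b H) ** sigY Y i (nodes ends ?b1 D1) = 0"
      by (rule z1) (use F SV in blast)
    moreover have "idS (elim ends b H) ** (if lvl ?T = i then Y bd ?T else 0) = 0"
      by (rule zT) (use F in blast)
    moreover have "idS (elim ends b H) ** sigY Y i (nodes ends ?b2 D2) = (if lvl H = i then Y b H else 0)"
      using SNode.IH(2)[OF wf2 sup2 3] .
    ultimately show ?thesis by (simp add: sig_Cons sig_append sig_Nil matrix_add_ldistrib)
  qed
qed

lemma Fb_root:
  assumes "sep_wf ends T"
    "\<forall>(b, H)\<in>set (nodes ends bd T). idS (elim ends b H) ** Y b H = Y b H"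
  shows "idS bd ** sigY Y i (nodes ends bd T) = 0"
proof (rule sig_zero, intro ballI, clarify)
  fix b H assume m: "(b, H) \<in> set (nodes ends bd T)"
  have d: "bd \<inter> elim ends b H = {}" using nodes_props[OF assms(1) m] by blast
  have s: "idS (elim ends b H) ** Y b H = Y b H" using assms(2) m by fast
  show "idS bd ** Y b H = 0" by (rule disj_zero[OF d s])
qed

lemma Fb:
  assumes "sep_wf ends T"
    "\<forall>(b, H)\<in>set (nodes ends bd T). idS (elim ends b H) ** Y b H = Y b H"
    "(b, H) \<in> set (nodes ends bd T)" "i \<le> lvl H"
  shows "idS b ** sigY Y i (nodes ends bd T) = 0"
  using assms
proof (induction T arbitrary: bd b H)
  case (SLeaf Es)
  then show ?case using Fb_root[OF SLeaf.prems(1,2)] by auto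
next
  case (SNode Es S D1 D2)
  let ?T = "SNode Es S D1 D2"
  let ?b1 = "child_bd ends bd S D1" and ?b2 = "child_bd ends bd S D2"
  have wf1: "sep_wf ends D1" and wf2: "sep_wf ends D2"
    and SV: "verts ends (region D1) \<inter> verts ends (region D2) = S" using SNode.prems by auto
  have sup1: "\<forall>(b, H)\<in>set (nodes ends ?b1 D1). idS (elim ends b H) ** Y b H = Y b H"
    and sup2: "\<forall>(b, H)\<in>set (nodes ends ?b2 D2). idS (elim ends b H) ** Y b H = Y b H"
    using SNode.prems(2) by auto
  have z1: "idS A ** sigY Y i (nodes ends ?b1 D1) = 0" if "A \<inter> (verts ends (region D1) - S) = {}" for A
  proof (rule sig_zero, intro ballI, clarify)
    fix b H assume m: "(b, H) \<in> set (nodes ends ?b1 D1)"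
    have d: "A \<inter> elim ends b H = {}" using that childF[OF wf1 m] by blast
    have s: "idS (elim ends b H) ** Y b H = Y b H" using sup1 m by fast
    show "idS A ** Y b H = 0" by (rule disj_zero[OF d s])
  qed
  have z2: "idS A ** sigY Y i (nodes ends ?b2 D2) = 0" if "A \<inter> (verts ends (region D2) - S) = {}" for A
  proof (rule sig_zero, intro ballI, clarify)
    fix b H assume m: "(b, H) \<in> set (nodes ends ?b2 D2)"
    have d: "A \<inter> elim ends b H = {}" using that childF[OF wf2 m] by blast
    have s: "idS (elim ends b H) ** Y b H = Y b H" using sup2 m by fast
    show "idS A ** Y b H = 0" by (rule disj_zero[OF d s])
  qed
  from SNode.prems(3) consider "(b, H) = (bd, ?T)"
    | "(b, H) \<in> set (nodes ends ?b1 D1)"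
    | "(b, H) \<in> set (nodes ends ?b2 D2)" by auto
  then show ?case
  proof cases
    case 1
    then show ?thesis using Fb_root[OF SNode.prems(1,2)] by auto
  next
    case 2
    have "lvl H \<le> lvl D1" using nodes_props[OF wf1 2] by auto
    then have nl: "lvl ?T \<noteq> i" using SNode.prems(4) by auto
    have B: "b \<subseteq> verts ends (region D1)" using childB[OF wf1 2] .
    have "idS b ** sigY Y i (nodes ends ?b2 D2) = 0"
      by (rule z2) (use B SV in blast)
    moreover have "idS b ** sigY Y i (nodes ends ?b1 D1) = 0"
      using SNode.IH(1)[OF wf1 sup1 2 SNode.prems(4)] .
    ultimately show ?thesis using nl by (simp add: sig_Cons sig_append sig_Nil matrix_add_ldistrib)
  next
    case 3
    have "lvl H \<le> lvl D2" using nodes_props[OF wf2 3] by auto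
    then have nl: "lvl ?T \<noteq> i" using SNode.prems(4) by auto
    have B: "b \<subseteq> verts ends (region D2)" using childB[OF wf2 3] .
    have "idS b ** sigY Y i (nodes ends ?b1 D1) = 0"
      by (rule z1) (use B SV in blast)
    moreover have "idS b ** sigY Y i (nodes ends ?b2 D2) = 0"
      using SNode.IH(2)[OF wf2 sup2 3 SNode.prems(4)] .
    ultimately show ?thesis using nl by (simp add: sig_Cons sig_append sig_Nil matrix_add_ldistrib)
  qed
qed

lemma lc_filter_sum:
  "sum_list [f x y. (x, y) \<leftarrow> xs, P y] = sum_list (map (\<lambda>(x, y). if P y then f x y else (0::real^'n^'m)) xs)"
  by (induction xs) auto

fun Kf :: "('e::finite \<Rightarrow> 'v::finite \<times> 'v) \<Rightarrow> ('e \<Rightarrow> real) \<Rightarrow> ('e set \<Rightarrow> real^'v^'v) \<Rightarrow> 'v set \<Rightarrow> ('v, 'e) stree \<Rightarrow> real^'v \<Rightarrow> real^'e" where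
  "Kf ends w L b (SLeaf Es) v = Jleaf ends w Es *v v"
| "Kf ends w L b (SNode Es S D1 D2) v =
     Kf ends w L (child_bd ends b S D1) D1 (Medge ends L (child_bd ends b S D1) D1 *v v) +
     Kf ends w L (child_bd ends b S D2) D2 (Medge ends L (child_bd ends b S D2) D2 *v v)"

lemma Kf_add: "Kf ends w L b T (u + v) = Kf ends w L b T u + Kf ends w L b T v"
  by (induction T arbitrary: b u v) (simp_all add: matrix_vector_right_distrib)

lemma Kf_zero: "Kf ends w L b T 0 = 0"
  using Kf_add[of ends w L b T 0 0] by simp

lemma down_sum:
  "(sum_list (map (\<lambda>(H, P). Jleaf ends w H ** P ** C) (down ends L b T))) *v z = Kf ends w L b T (C *v z)"
proof (induction T arbitrary: b C)
  case (SLeaf Es)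
  then show ?case by (simp add: matrix_vector_mul_assoc)
next
  case (SNode Es S D1 D2)
  let ?b1 = "child_bd ends b S D1" and ?b2 = "child_bd ends b S D2"
  let ?M1 = "Medge ends L ?b1 D1" and ?M2 = "Medge ends L ?b2 D2"
  have e1: "map (\<lambda>(H, P). Jleaf ends w H ** P ** C) (map (\<lambda>(H, P). (H, P ** ?M1)) (down ends L ?b1 D1))
      = map (\<lambda>(H, P). Jleaf ends w H ** P ** (?M1 ** C)) (down ends L ?b1 D1)"
    by (auto simp: matrix_mul_assoc)
  have e2: "map (\<lambda>(H, P). Jleaf ends w H ** P ** C) (map (\<lambda>(H, P). (H, P ** ?M2)) (down ends L ?b2 D2))
      = map (\<lambda>(H, P). Jleaf ends w H ** P ** (?M2 ** C)) (down ends L ?b2 D2)"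
    by (auto simp: matrix_mul_assoc)
  show ?case
    apply (simp only: down.simps map_append sum_list_append e1 e2 matrix_vector_mult_add_rdistrib
        SNode.IH Kf.simps)
    apply (simp add: matrix_vector_mul_assoc)
    done
qed

definition Qv :: "('e::finite \<Rightarrow> 'v::finite \<times> 'v) \<Rightarrow> ('e \<Rightarrow> real) \<Rightarrow> ('e set \<Rightarrow> real^'v^'v) \<Rightarrow> real^'v \<Rightarrow> 'v set \<Rightarrow> ('v, 'e) stree \<Rightarrow> real^'e" where
  "Qv ends w L z b T = sum_list (map (\<lambda>(b', A). Kf ends w L b' A (idS (elim ends b' A) *v z)) (nodes ends b T))"

lemma slack_eq: "slack_op ends w L T *v z = Qv ends w L z {} T"
proof -
  have "slack_op ends w L T = sum_list (map (\<lambda>(bd, A). sum_list (map (\<lambda>(H, P). Jleaf ends w H ** P ** idS (elim ends bd A)) (down ends L bd A))) (nodes ends {} T))"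
    unfolding slack_op_def by (rule refl)
  also have "\<dots> *v z = sum_list (map (\<lambda>(b', A). Kf ends w L b' A (idS (elim ends b' A) *v z)) (nodes ends {} T))"
    unfolding sum_list_mv
    apply (rule arg_cong[where f=sum_list], rule map_cong[OF refl])
    subgoal for x by (cases x) (simp only: prod.case down_sum)
    done
  finally show ?thesis unfolding Qv_def .
qed

fun Phi :: "('e::finite \<Rightarrow> 'v::finite \<times> 'v) \<Rightarrow> ('e \<Rightarrow> real) \<Rightarrow> ('e set \<Rightarrow> real^'v^'v) \<Rightarrow> real^'v \<Rightarrow> 'v set \<Rightarrow> ('v, 'e) stree \<Rightarrow> real^'v \<Rightarrow> real^'e" where
  "Phi ends w L z b (SLeaf Es) v = Jleaf ends w Es *v (v + idS (elim ends b (SLeaf Es)) *v z)"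
| "Phi ends w L z b (SNode Es S D1 D2) v =
     Phi ends w L z (child_bd ends b S D1) D1 (Medge ends L (child_bd ends b S D1) D1 *v (v + idS (elim ends b (SNode Es S D1 D2)) *v z)) +
     Phi ends w L z (child_bd ends b S D2) D2 (Medge ends L (child_bd ends b S D2) D2 *v (v + idS (elim ends b (SNode Es S D1 D2)) *v z))"

lemma Qv_leaf: "Qv ends w L z b (SLeaf Es) = Kf ends w L b (SLeaf Es) (idS (elim ends b (SLeaf Es)) *v z)"
  by (simp add: Qv_def)

lemma Qv_node: "Qv ends w L z b (SNode Es S D1 D2) =
   Kf ends w L b (SNode Es S D1 D2) (idS (elim ends b (SNode Es S D1 D2)) *v z)
   + Qv ends w L z (child_bd ends b S D1) D1 + Qv ends w L z (child_bd ends b S D2) D2"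
  by (simp add: Qv_def add.assoc del: elim.simps Kf.simps)

lemma Kf_Q_Phi: "Kf ends w L b T v + Qv ends w L z b T = Phi ends w L z b T v"
proof (induction T arbitrary: b v)
  case (SLeaf Es)
  then show ?case by (simp only: Qv_leaf Kf.simps Phi.simps matrix_vector_right_distrib)
next
  case (SNode Es S D1 D2)
  let ?T = "SNode Es S D1 D2"
  let ?u = "v + idS (elim ends b ?T) *v z"
  have "Kf ends w L b ?T v + Qv ends w L z b ?T
      = Kf ends w L b ?T ?u + Qv ends w L z (child_bd ends b S D1) D1 + Qv ends w L z (child_bd ends b S D2) D2"
    by (simp only: Qv_node Kf_add add.assoc)
  also have "\<dots> = Phi ends w L z b ?T v"
    by (simp only: Kf.simps(2)[of ends w L b Es S D1 D2 ?u] Phi.simps SNode.IH[symmetric] add_ac)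
  finally show ?case .
qed

lemma Phi_inv:
  assumes "sep_wf ends T"
    "\<forall>(b', H') \<in> set (nodes ends b T). idS (elim ends b' H') *v z0 = idS (elim ends b' H') *v z - transpose (Xop ends L b' H') *v z0"
    "\<forall>(b', H') \<in> set (nodes ends b T). transpose (Xop ends L b' H') ** idS b' = transpose (Xop ends L b' H')"
    "v = idS (b \<union> elim ends b T) *v z0 - idS (elim ends b T) *v z"
  shows "Phi ends w L z b T v = (sqrtW w ** incidence_on ends (region T)) *v z0"
  using assms
proof (induction T arbitrary: b v)
  case (SLeaf Es)
  have u: "v + idS (elim ends b (SLeaf Es)) *v z = idS (b \<union> elim ends b (SLeaf Es)) *v z0"
    using SLeaf.prems(4) by simp
  have "verts ends Es \<subseteq> b \<union> elim ends b (SLeaf Es)" by auto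
  then have "incidence_on ends Es ** idS (b \<union> elim ends b (SLeaf Es)) = incidence_on ends Es"
    by (rule inc_idS)
  then show ?case unfolding Phi.simps u Jleaf_def matrix_vector_mul_assoc region.simps
    by (simp only: matrix_mul_assoc[symmetric])
next
  case (SNode Es S D1 D2)
  let ?T = "SNode Es S D1 D2"
  let ?F = "elim ends b ?T"
  let ?u = "v + idS ?F *v z"
  have wf1: "sep_wf ends D1" and wf2: "sep_wf ends D2"
    and RU: "region D1 \<union> region D2 = Es" and RI: "region D1 \<inter> region D2 = {}"
    using SNode.prems(1) by auto
  have u: "?u = idS (b \<union> ?F) *v z0" using SNode.prems(4) by simp
  have child: "Medge ends L (child_bd ends b S D) D *v ?u
      = idS (child_bd ends b S D \<union> elim ends (child_bd ends b S D) D) *v z0 - idS (elim ends (child_bd ends b S D) D) *v z"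
    if wfD: "sep_wf ends D" and memD: "\<forall>x\<in>set (nodes ends (child_bd ends b S D) D). x \<in> set (nodes ends b ?T)" for D
  proof -
    let ?b1 = "child_bd ends b S D"
    let ?F1 = "elim ends ?b1 D"
    let ?Y = "transpose (Xop ends L ?b1 D)"
    have hd: "(?b1, D) \<in> set (nodes ends ?b1 D)" by (cases D) auto
    then have hdT: "(?b1, D) \<in> set (nodes ends b ?T)" using memD by blast
    have Z: "idS ?F1 *v z0 = idS ?F1 *v z - ?Y *v z0" using SNode.prems(2) hdT by fast
    have YB: "?Y ** idS ?b1 = ?Y" using SNode.prems(3) hdT by fast
    have F1: "?F1 \<subseteq> verts ends (region D) - S" using childF[OF wfD hd] .
    have F1b: "?F1 \<inter> ?b1 = {}" by (rule elim_bd)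
    have s1: "(?b1 \<union> ?F1) \<inter> (b \<union> ?F) = ?b1"
      using F1 F1b by (auto simp: child_bd_def)
    have s2: "?b1 \<inter> (b \<union> ?F) = ?b1" by (auto simp: child_bd_def)
    have "Medge ends L ?b1 D *v ?u = idS (?b1 \<union> ?F1) *v ?u - ?Y *v ?u"
      by (simp add: Medge_def matrix_vector_mult_diff_rdistrib)
    also have "idS (?b1 \<union> ?F1) *v ?u = idS ?b1 *v z0"
      unfolding u matrix_vector_mul_assoc idS_mult s1 ..
    also have "?Y *v ?u = ?Y *v z0"
    proof -
      have "?Y *v ?u = (?Y ** idS ?b1) *v ?u" using YB by simp
      also have "\<dots> = ?Y *v (idS (?b1 \<inter> (b \<union> ?F)) *v z0)"
        unfolding u by (simp add: matrix_vector_mul_assoc idS_mult flip: matrix_mul_assoc)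
      also have "\<dots> = (?Y ** idS ?b1) *v z0" unfolding s2 by (simp add: matrix_vector_mul_assoc)
      finally show ?thesis using YB by simp
    qed
    also have "idS ?b1 *v z0 - ?Y *v z0 = idS (?b1 \<union> ?F1) *v z0 - idS ?F1 *v z"
    proof -
      have "idS (?b1 \<union> ?F1) = idS ?b1 + idS ?F1" by (rule idS_Un) (use F1b in blast)
      then show ?thesis using Z by (simp add: matrix_vector_mult_add_rdistrib)
    qed
    finally show ?thesis .
  qed
  have m1: "\<forall>x\<in>set (nodes ends (child_bd ends b S D1) D1). x \<in> set (nodes ends b ?T)" by simp
  have m2: "\<forall>x\<in>set (nodes ends (child_bd ends b S D2) D2). x \<in> set (nodes ends b ?T)" by simp
  have P1: "Phi ends w L z (child_bd ends b S D1) D1 (Medge ends L (child_bd ends b S D1) D1 *v ?u)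
      = (sqrtW w ** incidence_on ends (region D1)) *v z0"
    by (rule SNode.IH(1)[OF wf1]) (use SNode.prems(2,3) m1 child[OF wf1 m1] in fast)+
  have P2: "Phi ends w L z (child_bd ends b S D2) D2 (Medge ends L (child_bd ends b S D2) D2 *v ?u)
      = (sqrtW w ** incidence_on ends (region D2)) *v z0"
    by (rule SNode.IH(2)[OF wf2]) (use SNode.prems(2,3) m2 child[OF wf2 m2] in fast)+
  have "incidence_on ends Es = incidence_on ends (region D1) + incidence_on ends (region D2)"
    using inc_Un[OF RI, of ends] RU by simp
  then show ?case
    by (simp only: Phi.simps P1 P2 region.simps matrix_add_ldistrib matrix_vector_mult_add_rdistrib)
qed

lemma Y_right: "transpose (Xop ends L b H) ** idS b = transpose (Xop ends L b H)"
proof -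
  let ?S = "submat (L (region H)) b (elim ends b H)"
  let ?P = "pinv (submat (L (region H)) (elim ends b H) (elim ends b H))"
  have "transpose ?S ** idS b = transpose ?S"
    using arg_cong[OF submat_left[of b "L (region H)" "elim ends b H"], of transpose]
    by (simp add: matrix_transpose_mul transpose_idS)
  then show ?thesis unfolding Xop_def matrix_transpose_mul
    by (simp flip: matrix_mul_assoc)
qed

lemma pinv_right:
  fixes M :: "real^'v^'v"
  assumes "transpose M = M"
  shows "pinv (submat M F F) ** idS F = pinv (submat M F F)"
proof -
  let ?A = "submat M F F"
  let ?P = "pinv ?A"
  have sA: "transpose ?A = ?A" using submat_sym[OF assms] .
  have mp: "is_pinv ?A ?P" using pinv_is_pinv[OF sA] .
  then have p2: "?P ** ?A ** ?P = ?P" and p3: "transpose (?A ** ?P) = ?A ** ?P"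
    unfolding is_pinv_def by auto
  have "?P = ?P ** (?A ** ?P)" using p2 by (simp add: matrix_mul_assoc)
  also have "\<dots> = ?P ** transpose (?A ** ?P)" using p3 by simp
  also have "\<dots> = ?P ** transpose ?P ** ?A" by (simp add: matrix_transpose_mul sA matrix_mul_assoc)
  finally have eP: "?P = ?P ** transpose ?P ** ?A" .
  have "?P ** idS F = ?P ** transpose ?P ** (?A ** idS F)"
    by (subst eP) (simp add: matrix_mul_assoc)
  also have "\<dots> = ?P ** transpose ?P ** ?A" by (simp add: submat_right)
  finally show ?thesis using eP by simp
qed

lemma Y_left:
  assumes "transpose (L (region H)) = L (region H)"
  shows "idS (elim ends b H) ** transpose (Xop ends L b H) = transpose (Xop ends L b H)"
proof -
  let ?F = "elim ends b H"
  let ?P = "pinv (submat (L (region H)) ?F ?F)"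
  have pr: "?P ** idS ?F = ?P" by (rule pinv_right[OF assms])
  have "idS ?F ** transpose ?P = transpose ?P"
    using arg_cong[OF pr, of transpose] by (simp add: matrix_transpose_mul transpose_idS)
  then show ?thesis unfolding Xop_def matrix_transpose_mul
    by (simp add: matrix_mul_assoc)
qed

lemma step_const:
  fixes f :: "nat \<Rightarrow> real^'v" and C :: "real^'v^'v"
  assumes "a \<le> c" "\<And>j. a \<le> j \<Longrightarrow> j < c \<Longrightarrow> C *v f j = C *v f (Suc j)"
  shows "C *v f a = C *v f c"
  using assms(1)
proof (induction c rule: dec_induct)
  case base then show ?case by simp
next
  case (step n) then show ?case using assms(2)[of n] by simp
qed

lemma z0_lemma:
  fixes zz :: "nat \<Rightarrow> real^'v::finite" and ends :: "'e::finite \<Rightarrow> 'v \<times> 'v"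
  assumes wf: "sep_wf ends T"
    and SF: "\<forall>(b, H)\<in>set (nodes ends {} T). idS (elim ends b H) ** Y b H = Y b H"
    and SB: "\<forall>(b, H)\<in>set (nodes ends {} T). Y b H ** idS b = Y b H"
    and step: "\<And>j. j < lvl T \<Longrightarrow> zz j = zz (Suc j) - sigY Y j (nodes ends {} T) *v zz (Suc j)"
    and mem: "(b, H) \<in> set (nodes ends {} T)"
  shows "idS (elim ends b H) *v zz 0 = idS (elim ends b H) *v zz (lvl T) - Y b H *v zz 0"
proof -
  let ?C = "idS (elim ends b H)"
  have stepC: "?C *v zz j = ?C *v zz (Suc j) - (if lvl H = j then Y b H else 0) *v zz (Suc j)"
    if "j < lvl T" for j
  proof -
    have "?C *v zz j = ?C *v zz (Suc j) - (?C ** sigY Y j (nodes ends {} T)) *v zz (Suc j)"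
      using step[OF that] by (simp add: matrix_vector_mult_diff_distrib matrix_vector_mul_assoc)
    then show ?thesis using Fa[OF wf SF mem, of j] by simp
  qed
  have const: "?C *v zz a = ?C *v zz c" if "a \<le> c" "c \<le> lvl T" "lvl H < a \<or> c \<le> lvl H" for a c
    by (rule step_const[OF that(1)]) (use stepC that in auto)
  have YB: "Y b H ** idS b = Y b H" using SB mem by fast
  from nodes_props[OF wf mem] have cases: "(b, H) = ({}, T) \<or> lvl H < lvl T" by blast
  then show ?thesis
  proof
    assume r: "(b, H) = ({}, T)"
    then have "Y b H = 0" using YB by (simp add: idS_empty)
    moreover have "?C *v zz 0 = ?C *v zz (lvl T)" by (rule const) (use r in auto)
    ultimately show ?thesis by simp
  next
    assume h: "lvl H < lvl T"
    have c1: "?C *v zz 0 = ?C *v zz (lvl H)" by (rule const) (use h in auto)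
    have c2: "?C *v zz (lvl H) = ?C *v zz (Suc (lvl H)) - Y b H *v zz (Suc (lvl H))"
      using stepC[OF h] by simp
    have c3: "?C *v zz (Suc (lvl H)) = ?C *v zz (lvl T)" by (rule const) (use h in auto)
    have c4: "idS b *v zz 0 = idS b *v zz (Suc (lvl H))"
    proof (rule step_const)
      fix j assume j: "0 \<le> j" "j < Suc (lvl H)"
      have "idS b ** sigY Y j (nodes ends {} T) = 0" using Fb[OF wf SF mem] j by simp
      then show "idS b *v zz j = idS b *v zz (Suc j)"
        using step[of j] j h by (simp add: matrix_vector_mult_diff_distrib matrix_vector_mul_assoc)
    qed simp
    have "Y b H *v zz (Suc (lvl H)) = Y b H *v zz 0"
    proof -
      have "Y b H *v zz (Suc (lvl H)) = (Y b H ** idS b) *v zz (Suc (lvl H))"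
        using YB by simp
      also have "\<dots> = Y b H *v (idS b *v zz (Suc (lvl H)))" by (simp only: matrix_vector_mul_assoc)
      also have "\<dots> = Y b H *v (idS b *v zz 0)" using c4 by simp
      also have "\<dots> = (Y b H ** idS b) *v zz 0" by (simp only: matrix_vector_mul_assoc)
      also have "\<dots> = Y b H *v zz 0" using YB by simp
      finally show ?thesis .
    qed
    then show ?thesis using c1 c2 c3 by simp
  qed
qed

theorem mainTheorem14:
  fixes ends :: "'e::finite \<Rightarrow> 'v::finite \<times> 'v"
    and w :: "'e \<Rightarrow> real"
    and T :: "('v, 'e) stree"
    and L :: "'e set \<Rightarrow> real^'v^'v"
    and z :: "real^'v"
  assumes no_loops: "\<forall>e. fst (ends e) \<noteq> snd (ends e)"
    and conn: "graph_connected ends"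
    and wpos: "\<forall>e. w e > 0"
    and tree: "separator_tree ends T"
    and lap: "\<forall>(bd, H) \<in> set (nodes ends {} T). laplacian_on (bd \<union> elim ends bd H) (L (region H))"
  shows "slack_op ends w L T *v z =
         (sqrtW w ** incidence ends ** foldr (\<lambda>i A. transpose (PiOp ends L T i) ** A) [0..<lvl T] (mat 1)) *v z"
proof -
  define Y where "Y = (\<lambda>b H. transpose (Xop ends L b H))"
  define zz where "zz = (\<lambda>j. foldr (\<lambda>i A. transpose (PiOp ends L T i) ** A) [j..<lvl T] (mat 1) *v z)"
  have wf: "sep_wf ends T" and rT: "region T = UNIV" using tree by (auto simp: separator_tree_def)
  have SF: "\<forall>(b, H)\<in>set (nodes ends {} T). idS (elim ends b H) ** Y b H = Y b H"
  proof (intro ballI, clarify)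
    fix b H assume m: "(b, H) \<in> set (nodes ends {} T)"
    have "transpose (L (region H)) = L (region H)" using lap m by (auto simp: laplacian_on_def)
    then show "idS (elim ends b H) ** Y b H = Y b H" unfolding Y_def by (rule Y_left)
  qed
  have SB: "\<forall>(b, H)\<in>set (nodes ends {} T). Y b H ** idS b = Y b H"
    unfolding Y_def by (auto simp: Y_right)
  have PiT: "transpose (PiOp ends L T i) = mat 1 - sigY Y i (nodes ends {} T)" for i
  proof -
    have "transpose (PiOp ends L T i) = mat 1 - transpose (sum_list (map (\<lambda>(x, y). if lvl y = i then Xop ends L x y else 0) (nodes ends {} T)))"
      unfolding PiOp_def lc_filter_sum by (simp add: transpose_diff)
    also have "transpose (sum_list (map (\<lambda>(x, y). if lvl y = i then Xop ends L x y else 0) (nodes ends {} T)))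
        = sigY Y i (nodes ends {} T)"
      unfolding transpose_sum_list sigY_def Y_def
      apply (rule arg_cong[where f=sum_list], rule map_cong[OF refl])
      subgoal for x by (cases x) simp
      done
    finally show ?thesis .
  qed
  have step: "zz j = zz (Suc j) - sigY Y j (nodes ends {} T) *v zz (Suc j)" if "j < lvl T" for j
  proof -
    have "[j..<lvl T] = j # [Suc j..<lvl T]" using that by (rule upt_conv_Cons)
    then have "zz j = transpose (PiOp ends L T j) *v zz (Suc j)"
      unfolding zz_def by (simp add: matrix_vector_mul_assoc)
    then show ?thesis by (simp add: PiT matrix_vector_mult_diff_rdistrib)
  qed
  have ztop: "zz (lvl T) = z" unfolding zz_def by simp
  have Z: "\<forall>(b', H')\<in>set (nodes ends {} T). idS (elim ends b' H') *v zz 0 = idS (elim ends b' H') *v z - transpose (Xop ends L b' H') *v zz 0"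
  proof (intro ballI, clarify)
    fix b H assume m: "(b, H) \<in> set (nodes ends {} T)"
    show "idS (elim ends b H) *v zz 0 = idS (elim ends b H) *v z - transpose (Xop ends L b H) *v zz 0"
      using z0_lemma[OF wf SF SB step m] ztop unfolding Y_def by simp
  qed
  have SB': "\<forall>(b', H')\<in>set (nodes ends {} T). transpose (Xop ends L b' H') ** idS b' = transpose (Xop ends L b' H')"
    by (auto simp: Y_right)
  have root: "({}, T) \<in> set (nodes ends {} T)" by (cases T) auto
  have Y0: "transpose (Xop ends L {} T) = 0"
    using Y_right[of ends L "{}" T] by (simp add: idS_empty)
  have v0: "(0::real^'v) = idS ({} \<union> elim ends {} T) *v zz 0 - idS (elim ends {} T) *v z"
  proof -
    have "idS (elim ends {} T) *v zz 0 = idS (elim ends {} T) *v z - transpose (Xop ends L {} T) *v zz 0"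
      using Z root by fast
    then show ?thesis using Y0 by simp
  qed
  have "slack_op ends w L T *v z = Phi ends w L z {} T 0"
    using slack_eq[of ends w L T z] Kf_Q_Phi[of ends w L "{}" T 0 z] by (simp add: Kf_zero)
  also have "\<dots> = (sqrtW w ** incidence_on ends (region T)) *v zz 0"
    by (rule Phi_inv[OF wf Z SB' v0])
  also have "\<dots> = (sqrtW w ** incidence ends ** foldr (\<lambda>i A. transpose (PiOp ends L T i) ** A) [0..<lvl T] (mat 1)) *v z"
    unfolding rT inc_UNIV zz_def by (simp add: matrix_vector_mul_assoc)
  finally show ?thesis .
qed

end
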